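(* Let $L=\{<,\ldots\}$ be a countable first order language containing a binary relation symbol $<$, and let $T$ be a complete $L$-theory with Skolem functions in which $<$ is interpreted as a linear order. Then: (i) If $T$ satisfies the inaccessibility scheme, then $T$ satisfies the regularity scheme for formulas with $|\bar{x}|=1$. (ii) If $T$ satisfies the regularity scheme for formulas with $|\bar{x}|=1$, then $T$ satisfies the regularity scheme (for formulas with $\bar{x}$ of arbitrary finite length).
   Context: For a formula $\varphi(\bar{x},\bar{t})$ and tuples $\bar{y}_0,\bar{y}_1$ of the same length as $\bar{x}$, write $E_{\varphi}(\bar{y}_0,\bar{y}_1;z_0)$ for $(\forall \bar{t}<z_0)(\varphi(\bar{y}_0,\bar{t})\leftrightarrow\varphi(\bar{y}_1,\bar{t}))$; here $\bar{t}<z_0$ means every coordinate of $\bar{t}$ is $<z_0$. $T$ satisfies the inaccessibility scheme if for every $L$-formula $\varphi(\bar{x},\bar{t})$ (with $\bar{x}$ of any finite length), $T\models (\forall z_0)(\exists z_1>z_0)(\forall\bar{y}_0)(\exists\bar{y}_1<z_1)E_{\varphi}(\bar{y}_0,\bar{y}_1;z_0)$. "$T$ has Skolem functions" means that for every formula $\theta(y,\bar{x})$ there is a term $\tau(\bar{x})$ of $L$ with $T\models \forall\bar{x}(\exists y\,\theta(y,\bar{x})\to\theta(\tau(\bar{x}),\bar{x}))$. For $\bar{x}=(x_1,\ldots,x_n)$ and a formula $\chi(\bar{x})$ with parameters from a model $M$, $\chi(\bar{x})$ is $\bar{x}$-unbounded in $M$ if $M\models(\forall\alpha_1)(\exists x_1>\alpha_1)\cdots(\forall\alpha_n)(\exists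 x_n>\alpha_n)\chi(\bar{x})$; otherwise it is $\bar{x}$-bounded. $T$ satisfies the regularity scheme (for formulas with $|\bar{x}|=k$, resp. for all $\bar{x}$) if for every $L$-formula $\varphi(\bar{x},\bar{y},\bar{t})$ (with $|\bar{x}|=k$, resp. arbitrary), every model $M\models T$, every $y_0\in M$ and every $\bar{b}\in M$ with $|\bar{b}|=|\bar{t}|$: if $(\exists\bar{y}<y_0)\varphi(\bar{x},\bar{y},\bar{b})$ is $\bar{x}$-unbounded in $M$, then there is $\bar{y}_1\in M$ with $\bar{y}_1<y_0$ (coordinatewise) such that $\varphi(\bar{x},\bar{y}_1,\bar{b})$ is $\bar{x}$-unbounded in $M$. *)

theory Defs
  imports Main "HOL-Library.Countable_Set"
begin

datatype 'f trm = Var nat | Fn 'f "'f trm list"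

datatype ('f, 'r) fm =
    Eq "'f trm" "'f trm"
  | Rel 'r "'f trm list"
  | Neg "('f, 'r) fm"
  | Conj "('f, 'r) fm" "('f, 'r) fm"
  | Ex nat "('f, 'r) fm"

fun wf_trm :: "('f \<Rightarrow> nat) \<Rightarrow> 'f trm \<Rightarrow> bool" where
  "wf_trm fa (Var n) = True"
| "wf_trm fa (Fn f ts) = (length ts = fa f \<and> list_all (wf_trm fa) ts)"

fun vars_trm :: "'f trm \<Rightarrow> nat set" where
  "vars_trm (Var n) = {n}"
| "vars_trm (Fn f ts) = \<Union> (set (map vars_trm ts))"

fun wf_fm :: "('f \<Rightarrow> nat) \<Rightarrow> ('r \<Rightarrow> nat) \<Rightarrow> ('f, 'r) fm \<Rightarrow> bool" where
  "wf_fm fa ra (Eq s t) = (wf_trm fa s \<and> wf_trm fa t)"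
| "wf_fm fa ra (Rel r ts) = (length ts = ra r \<and> list_all (wf_trm fa) ts)"
| "wf_fm fa ra (Neg p) = wf_fm fa ra p"
| "wf_fm fa ra (Conj p q) = (wf_fm fa ra p \<and> wf_fm fa ra q)"
| "wf_fm fa ra (Ex x p) = wf_fm fa ra p"

fun fv :: "('f, 'r) fm \<Rightarrow> nat set" where
  "fv (Eq s t) = vars_trm s \<union> vars_trm t"
| "fv (Rel r ts) = \<Union> (set (map vars_trm ts))"
| "fv (Neg p) = fv p"
| "fv (Conj p q) = fv p \<union> fv q"
| "fv (Ex x p) = fv p - {x}"

definition L_sentence :: "('f \<Rightarrow> nat) \<Rightarrow> ('r \<Rightarrow> nat) \<Rightarrow> ('f, 'r) fm \<Rightarrow> bool" where
  "L_sentence fa ra \<sigma> \<longleftrightarrow> wf_fm fa ra \<sigma> \<and> fv \<sigma> = {}"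

record ('a, 'f, 'r) struc =
  U :: "'a set"
  FI :: "'f \<Rightarrow> 'a list \<Rightarrow> 'a"
  RI :: "'r \<Rightarrow> 'a list \<Rightarrow> bool"

definition is_struct :: "('f \<Rightarrow> nat) \<Rightarrow> ('a, 'f, 'r) struc \<Rightarrow> bool" where
  "is_struct fa M \<longleftrightarrow> U M \<noteq> {} \<and>
     (\<forall>f as. length as = fa f \<and> set as \<subseteq> U M \<longrightarrow> FI M f as \<in> U M)"

definition is_env :: "('a, 'f, 'r) struc \<Rightarrow> (nat \<Rightarrow> 'a) \<Rightarrow> bool" where
  "is_env M e \<longleftrightarrow> (\<forall>v. e v \<in> U M)"

fun evalt :: "('a, 'f, 'r) struc \<Rightarrow> (nat \<Rightarrow> 'a) \<Rightarrow> 'f trm \<Rightarrow> 'a" where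
  "evalt M e (Var n) = e n"
| "evalt M e (Fn f ts) = FI M f (map (evalt M e) ts)"

fun sat :: "('a, 'f, 'r) struc \<Rightarrow> (nat \<Rightarrow> 'a) \<Rightarrow> ('f, 'r) fm \<Rightarrow> bool" where
  "sat M e (Eq s t) = (evalt M e s = evalt M e t)"
| "sat M e (Rel r ts) = RI M r (map (evalt M e) ts)"
| "sat M e (Neg p) = (\<not> sat M e p)"
| "sat M e (Conj p q) = (sat M e p \<and> sat M e q)"
| "sat M e (Ex x p) = (\<exists>a\<in>U M. sat M (e(x := a)) p)"

definition models :: "'a itself \<Rightarrow> ('f \<Rightarrow> nat) \<Rightarrow> ('r \<Rightarrow> nat) \<Rightarrow> ('f, 'r) fm set
    \<Rightarrow> ('a, 'f, 'r) struc set" where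
  "models _ fa ra T = {M. is_struct fa M \<and> (\<forall>\<sigma>\<in>T. \<forall>e. is_env M e \<longrightarrow> sat M e \<sigma>)}"

text \<open>Semantic consequence \<open>T \<Turnstile> \<phi>\<close> (universal closure), relative to models in \<open>'a\<close>.\<close>
definition entails :: "'a itself \<Rightarrow> ('f \<Rightarrow> nat) \<Rightarrow> ('r \<Rightarrow> nat) \<Rightarrow> ('f, 'r) fm set
    \<Rightarrow> ('f, 'r) fm \<Rightarrow> bool" where
  "entails A fa ra T \<phi> \<longleftrightarrow> (\<forall>M\<in>models A fa ra T. \<forall>e. is_env M e \<longrightarrow> sat M e \<phi>)"

definition complete_theory :: "'a itself \<Rightarrow> ('f \<Rightarrow> nat) \<Rightarrow> ('r \<Rightarrow> nat) \<Rightarrow> ('f, 'r) fm set \<Rightarrow> bool" where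
  "complete_theory A fa ra T \<longleftrightarrow>
     (\<forall>\<sigma>\<in>T. L_sentence fa ra \<sigma>) \<and> models A fa ra T \<noteq> {} \<and>
     (\<forall>\<sigma>. L_sentence fa ra \<sigma> \<longrightarrow> entails A fa ra T \<sigma> \<or> entails A fa ra T (Neg \<sigma>))"

text \<open>Skolem functions: for every formula \<open>\<theta>(y, x)\<close> there is an L-term \<open>\<tau>(x)\<close> with
  \<open>T \<Turnstile> \<forall>x (\<exists>y \<theta>(y,x) \<longrightarrow> \<theta>(\<tau>(x),x))\<close> (substitution written semantically).\<close>
definition has_skolem :: "'a itself \<Rightarrow> ('f \<Rightarrow> nat) \<Rightarrow> ('r \<Rightarrow> nat) \<Rightarrow> ('f, 'r) fm set \<Rightarrow> bool" where
  "has_skolem A fa ra T \<longleftrightarrow>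
     (\<forall>\<theta> y. wf_fm fa ra \<theta> \<longrightarrow>
        (\<exists>\<tau>. wf_trm fa \<tau> \<and> vars_trm \<tau> \<subseteq> fv \<theta> - {y} \<and>
           (\<forall>M\<in>models A fa ra T. \<forall>e. is_env M e \<longrightarrow>
              (\<exists>a\<in>U M. sat M (e(y := a)) \<theta>) \<longrightarrow> sat M (e(y := evalt M e \<tau>)) \<theta>)))"

abbreviation ltM :: "('a, 'f, 'r) struc \<Rightarrow> 'r \<Rightarrow> 'a \<Rightarrow> 'a \<Rightarrow> bool" where
  "ltM M lt a b \<equiv> RI M lt [a, b]"

definition lt_linear :: "'a itself \<Rightarrow> ('f \<Rightarrow> nat) \<Rightarrow> ('r \<Rightarrow> nat) \<Rightarrow> 'r \<Rightarrow> ('f, 'r) fm set \<Rightarrow> bool" where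
  "lt_linear A fa ra lt T \<longleftrightarrow>
     (\<forall>M\<in>models A fa ra T.
        (\<forall>a\<in>U M. \<not> ltM M lt a a) \<and>
        (\<forall>a\<in>U M. \<forall>b\<in>U M. \<forall>c\<in>U M. ltM M lt a b \<and> ltM M lt b c \<longrightarrow> ltM M lt a c) \<and>
        (\<forall>a\<in>U M. \<forall>b\<in>U M. ltM M lt a b \<or> a = b \<or> ltM M lt b a))"

definition assign :: "(nat \<Rightarrow> 'a) \<Rightarrow> nat list \<Rightarrow> 'a list \<Rightarrow> nat \<Rightarrow> 'a" where
  "assign e xs as = (\<lambda>v. case map_of (zip xs as) v of None \<Rightarrow> e v | Some a \<Rightarrow> a)"

text \<open>Inaccessibility scheme (T \<Turnstile> the displayed sentence, unfolded semantically).\<close>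
definition inaccessible :: "'a itself \<Rightarrow> ('f \<Rightarrow> nat) \<Rightarrow> ('r \<Rightarrow> nat) \<Rightarrow> 'r \<Rightarrow> ('f, 'r) fm set \<Rightarrow> bool" where
  "inaccessible A fa ra lt T \<longleftrightarrow>
     (\<forall>\<phi> xs ts. wf_fm fa ra \<phi> \<and> distinct (xs @ ts) \<and> fv \<phi> \<subseteq> set (xs @ ts) \<longrightarrow>
        (\<forall>M\<in>models A fa ra T. \<forall>e. is_env M e \<longrightarrow>
          (\<forall>z0\<in>U M. \<exists>z1\<in>U M. ltM M lt z0 z1 \<and>
             (\<forall>ys0. length ys0 = length xs \<and> set ys0 \<subseteq> U M \<longrightarrow>
               (\<exists>ys1. length ys1 = length xs \<and> set ys1 \<subseteq> U M \<and> (\<forall>y\<in>set ys1. ltM M lt y z1) \<and>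
                 (\<forall>ts'. length ts' = length ts \<and> set ts' \<subseteq> U M \<and> (\<forall>t\<in>set ts'. ltM M lt t z0) \<longrightarrow>
                   (sat M (assign e (xs @ ts) (ys0 @ ts')) \<phi> \<longleftrightarrow>
                    sat M (assign e (xs @ ts) (ys1 @ ts')) \<phi>)))))))"

text \<open>\<open>unb M lt n P\<close>: \<open>(\<forall>\<alpha>1)(\<exists>x1>\<alpha>1)\<dots>(\<forall>\<alpha>n)(\<exists>xn>\<alpha>n) P [x1,\<dots>,xn]\<close> holds in M.\<close>
fun unb :: "('a, 'f, 'r) struc \<Rightarrow> 'r \<Rightarrow> nat \<Rightarrow> ('a list \<Rightarrow> bool) \<Rightarrow> bool" where
  "unb M lt 0 P = P []"
| "unb M lt (Suc n) P =
     (\<forall>\<alpha>\<in>U M. \<exists>x\<in>U M. ltM M lt \<alpha> x \<and> unb M lt n (\<lambda>xs. P (x # xs)))"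

definition regular :: "'a itself \<Rightarrow> ('f \<Rightarrow> nat) \<Rightarrow> ('r \<Rightarrow> nat) \<Rightarrow> 'r \<Rightarrow> ('f, 'r) fm set \<Rightarrow> nat \<Rightarrow> bool" where
  "regular A fa ra lt T k \<longleftrightarrow>
     (\<forall>\<phi> xs ys ts. length xs = k \<and> wf_fm fa ra \<phi> \<and> distinct (xs @ ys @ ts) \<and>
         fv \<phi> \<subseteq> set (xs @ ys @ ts) \<longrightarrow>
       (\<forall>M\<in>models A fa ra T. \<forall>e. is_env M e \<longrightarrow>
         (\<forall>y0\<in>U M. \<forall>bs. length bs = length ts \<and> set bs \<subseteq> U M \<longrightarrow>
            unb M lt k (\<lambda>as. \<exists>cs. length cs = length ys \<and> set cs \<subseteq> U M \<and>
                 (\<forall>c\<in>set cs. ltM M lt c y0) \<and> sat M (assign e (xs @ ys @ ts) (as @ cs @ bs)) \<phi>)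
            \<longrightarrow> (\<exists>cs. length cs = length ys \<and> set cs \<subseteq> U M \<and> (\<forall>c\<in>set cs. ltM M lt c y0) \<and>
                  unb M lt k (\<lambda>as. sat M (assign e (xs @ ys @ ts) (as @ cs @ bs)) \<phi>)))))"

end

theory Submission
  imports Defs
begin

lemma evalt_cong: "(\<forall>v\<in>vars_trm t. e v = e' v) \<Longrightarrow> evalt M e t = evalt M e' t"
proof (induction t)
  case (Fn f ts)
  have "map (evalt M e) ts = map (evalt M e') ts"
    by (rule map_cong[OF refl]) (use Fn in auto)
  then show ?case by (simp only: evalt.simps)
qed simp

lemma sat_cong: "(\<forall>v\<in>fv p. e v = e' v) \<Longrightarrow> sat M e p = sat M e' p"
proof (induction p arbitrary: e e')
  case (Eq s t) then show ?case using evalt_cong[of s e e' M] evalt_cong[of t e e' M] by auto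
next
  case (Rel r ts)
  have "map (evalt M e) ts = map (evalt M e') ts"
    by (rule map_cong[OF refl], rule evalt_cong) (use Rel in auto)
  then show ?case by (simp only: sat.simps)
next
  case (Neg p) then show ?case by simp
next
  case (Conj p q) then show ?case by (metis UnCI fv.simps(4) sat.simps(4))
next
  case (Ex x p)
  have "\<And>a. sat M (e(x:=a)) p = sat M (e'(x:=a)) p" using Ex by (intro Ex.IH) auto
  then show ?case by simp
qed

lemma finite_fv: "finite (fv p)"
proof -
  have t: "finite (vars_trm t)" for t :: "'f trm" by (induction t) auto
  show ?thesis by (induction p) (auto simp: t)
qed

lemma assign_Nil[simp]: "assign e [] as = e" "assign e xs [] = e"
  by (auto simp: assign_def)

lemma assign_Cons[simp]: "assign e (x#xs) (a#as) = (assign e xs as)(x:=a)"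
  by (auto simp: assign_def)

lemma assign_append: "length xs = length as \<Longrightarrow> assign e (xs@ys) (as@bs) = assign (assign e ys bs) xs as"
  by (induction xs as rule: list_induct2) auto

lemma assign_upd: "v \<notin> set xs \<Longrightarrow> assign (e(v:=c)) xs as = (assign e xs as)(v:=c)"
proof -
  assume v: "v \<notin> set xs"
  have "map_of (zip xs as) v = None" using v by (auto simp: map_of_eq_None_iff dest: set_zip_leftD)
  then show ?thesis by (auto simp: assign_def split: option.splits)
qed

lemma unb_mono: "(\<And>as. length as = n \<Longrightarrow> P as \<Longrightarrow> Q as) \<Longrightarrow> unb M lt n P \<Longrightarrow> unb M lt n Q"
proof (induction n arbitrary: P Q)
  case 0 then show ?case by simp
next
  case (Suc n)
  show ?case using Suc.prems(2) unfolding unb.simps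
    by (metis (no_types, lifting) Suc.IH Suc.prems(1) length_Cons)
qed

lemma unb_cong: "(\<And>as. length as = n \<Longrightarrow> P as = Q as) \<Longrightarrow> unb M lt n P = unb M lt n Q"
  by (metis unb_mono)

lemma fresh_list: "finite (S::nat set) \<Longrightarrow> \<exists>vs. length vs = k \<and> distinct vs \<and> set vs \<inter> S = {}"
proof (induction k arbitrary: S)
  case 0 then show ?case by simp
next
  case (Suc k)
  obtain v where v: "v \<notin> S" using Suc.prems infinite_UNIV_nat ex_new_if_finite by blast
  obtain vs where "length vs = k" "distinct vs" "set vs \<inter> insert v S = {}"
    using Suc.IH[of "insert v S"] Suc.prems by auto
  then show ?case using v by (intro exI[of _ "v#vs"]) auto
qed

definition All :: "nat \<Rightarrow> ('f,'r) fm \<Rightarrow> ('f,'r) fm" where "All v p = Neg (Ex v (Neg p))"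

fun unbf :: "'r \<Rightarrow> nat list \<Rightarrow> nat list \<Rightarrow> ('f,'r) fm \<Rightarrow> ('f,'r) fm" where
  "unbf lt (a#as) (x#xs) p = All a (Ex x (Conj (Rel lt [Var a, Var x]) (unbf lt as xs p)))"
| "unbf lt _ _ p = p"

lemma unbf_wf: "ra lt = 2 \<Longrightarrow> wf_fm fa ra p \<Longrightarrow> wf_fm fa ra (unbf lt as xs p)"
  by (induction lt as xs p rule: unbf.induct) (auto simp: All_def)

lemma unbf_fv: "fv (unbf lt as xs p) \<subseteq> fv p"
  by (induction lt as xs p rule: unbf.induct) (auto simp: All_def)

lemma unbf_sat:
  "length as = length xs \<Longrightarrow> distinct as \<Longrightarrow> distinct xs \<Longrightarrow> set as \<inter> set xs = {} \<Longrightarrow> set as \<inter> fv p = {} \<Longrightarrow>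
   sat M e (unbf lt as xs p) \<longleftrightarrow> unb M lt (length xs) (\<lambda>bs. sat M (assign e xs bs) p)"
proof (induction as xs arbitrary: e rule: list_induct2)
  case Nil then show ?case by simp
next
  case (Cons a as x xs)
  have ax: "a \<noteq> x" using Cons.prems by auto
  have key: "sat M (e(a:=c, x:=b)) (unbf lt as xs p) \<longleftrightarrow>
      unb M lt (length xs) (\<lambda>bs. sat M (assign e (x#xs) (b#bs)) p)" for c b
  proof -
    have "sat M (e(a:=c, x:=b)) (unbf lt as xs p) \<longleftrightarrow>
       unb M lt (length xs) (\<lambda>bs. sat M (assign (e(a:=c, x:=b)) xs bs) p)"
      using Cons by (intro Cons.IH) auto
    also have "\<dots> \<longleftrightarrow> unb M lt (length xs) (\<lambda>bs. sat M (assign e (x#xs) (b#bs)) p)"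
    proof (rule unb_cong)
      fix bs
      have e1: "e(a:=c, x:=b) = e(x:=b, a:=c)" using ax by auto
      have "assign (e(a:=c, x:=b)) xs bs = (assign (e(x:=b)) xs bs)(a:=c)"
        unfolding e1 using Cons.prems by (intro assign_upd) auto
      moreover have "assign (e(x:=b)) xs bs = assign e (x#xs) (b#bs)"
        using Cons.prems by (simp add: assign_upd)
      moreover have "sat M ((assign e (x#xs) (b#bs))(a:=c)) p = sat M (assign e (x#xs) (b#bs)) p"
        using Cons.prems by (intro sat_cong) auto
      ultimately show "sat M (assign (e(a:=c, x:=b)) xs bs) p = sat M (assign e (x#xs) (b#bs)) p"
        by simp
    qed
    finally show ?thesis .
  qed
  show ?case using ax by (simp add: All_def key)
qed

lemma unbf_fv2: "length as = length xs \<Longrightarrow> fv (unbf lt as xs p) \<subseteq> fv p - set xs"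
  by (induction as xs rule: list_induct2) (auto simp: All_def)

lemma envEQ:
  assumes "distinct (x1 # xs' @ ys @ ts)" "length as' = length xs'" "length cs = length ys"
  shows "assign e (xs' @ ys @ x1 # ts) (as' @ cs @ a1 # bs) = assign (assign e (x1 # ys @ ts) (a1 # cs @ bs)) xs' as'"
    and "assign e ((x1#xs') @ ys @ ts) ((a1#as') @ cs @ bs) = assign (assign e (x1 # ys @ ts) (a1 # cs @ bs)) xs' as'"
proof -
  have x1: "x1 \<notin> set xs'" "x1 \<notin> set ys" using assms(1) by auto
  have "assign e (ys @ x1 # ts) (cs @ a1 # bs) = assign ((assign e ts bs)(x1:=a1)) ys cs"
    using assms(3) by (simp add: assign_append)
  also have "\<dots> = (assign (assign e ts bs) ys cs)(x1:=a1)" using x1 by (simp add: assign_upd)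
  also have "\<dots> = assign e (x1 # ys @ ts) (a1 # cs @ bs)" using assms(3) by (simp add: assign_append)
  finally have E: "assign e (ys @ x1 # ts) (cs @ a1 # bs) = assign e (x1 # ys @ ts) (a1 # cs @ bs)" .
  show "assign e (xs' @ ys @ x1 # ts) (as' @ cs @ a1 # bs) = assign (assign e (x1 # ys @ ts) (a1 # cs @ bs)) xs' as'"
    using assms(2) E by (simp add: assign_append)
  show "assign e ((x1#xs') @ ys @ ts) ((a1#as') @ cs @ bs) = assign (assign e (x1 # ys @ ts) (a1 # cs @ bs)) xs' as'"
    using assms(2,3) x1 by (simp add: assign_append assign_upd)
qed

lemma envEQ3:
  assumes "distinct (x1 # xs' @ ys @ ts)" "length as' = length xs'" "length cs = length ys"
  shows "assign e (xs' @ ys @ x1 # ts) (as' @ cs @ a1 # bs) = assign e ((x1#xs') @ ys @ ts) ((a1#as') @ cs @ bs)"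
  using envEQ[OF assms, of e a1 bs] by (rule trans[OF _ sym])

lemma reg_step:
  assumes lt2: "ra lt = 2" and R1: "regular A fa ra lt T 1" and Rk: "regular A fa ra lt T k"
  shows "regular A fa ra lt T (Suc k)"
  unfolding regular_def
proof (intro allI impI ballI)
  fix \<phi> xs ys ts M e y0 bs
  assume H0: "length xs = Suc k \<and> wf_fm fa ra \<phi> \<and> distinct (xs @ ys @ ts) \<and> fv \<phi> \<subseteq> set (xs @ ys @ ts)"
    and M: "M \<in> models A fa ra T" and e: "is_env M e" and y0: "y0 \<in> U M"
    and bs: "length bs = length ts \<and> set bs \<subseteq> U M"
    and H: "unb M lt (Suc k) (\<lambda>as. \<exists>cs. length cs = length ys \<and> set cs \<subseteq> U M \<and>
                 (\<forall>c\<in>set cs. ltM M lt c y0) \<and> sat M (assign e (xs @ ys @ ts) (as @ cs @ bs)) \<phi>)"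
  from H0 obtain x1 xs' where xs: "xs = x1#xs'" and lxs': "length xs' = k" by (cases xs) auto
  have dist: "distinct (x1 # xs' @ ys @ ts)" using H0 xs by simp
  obtain \<alpha>s where \<alpha>s: "length \<alpha>s = k" "distinct \<alpha>s" "set \<alpha>s \<inter> (fv \<phi> \<union> set xs') = {}"
    using fresh_list[of "fv \<phi> \<union> set xs'" k] finite_fv by auto
  define \<theta> where "\<theta> = unbf lt \<alpha>s xs' \<phi>"
  have \<theta>sat: "sat M E \<theta> \<longleftrightarrow> unb M lt k (\<lambda>as. sat M (assign E xs' as) \<phi>)" for E
  proof -
    have "sat M E \<theta> \<longleftrightarrow> unb M lt (length xs') (\<lambda>as. sat M (assign E xs' as) \<phi>)"
      unfolding \<theta>_def by (rule unbf_sat) (use \<alpha>s lxs' dist in auto)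
    then show ?thesis using lxs' by simp
  qed
  have \<theta>wf: "wf_fm fa ra \<theta>" unfolding \<theta>_def by (rule unbf_wf[where ra=ra and lt=lt, OF lt2]) (use H0 in simp)
  have \<theta>fv: "fv \<theta> \<subseteq> set ([x1] @ ys @ ts)"
  proof -
    have "fv \<theta> \<subseteq> fv \<phi> - set xs'" unfolding \<theta>_def using unbf_fv2[of \<alpha>s xs' lt \<phi>] \<alpha>s lxs' by simp
    then show ?thesis using H0 xs by auto
  qed
  have distR1: "distinct ([x1] @ ys @ ts)" using dist by auto
  have hyp1: "unb M lt 1 (\<lambda>as. \<exists>cs. length cs = length ys \<and> set cs \<subseteq> U M \<and>
                 (\<forall>c\<in>set cs. ltM M lt c y0) \<and> sat M (assign e ([x1] @ ys @ ts) (as @ cs @ bs)) \<theta>)"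
  proof -
  have "\<forall>\<alpha>\<in>U M. \<exists>x\<in>U M. ltM M lt \<alpha> x \<and> (\<exists>cs. length cs = length ys \<and> set cs \<subseteq> U M \<and>
                 (\<forall>c\<in>set cs. ltM M lt c y0) \<and> sat M (assign e ([x1] @ ys @ ts) ([x] @ cs @ bs)) \<theta>)"
  proof
    fix \<alpha> assume "\<alpha> \<in> U M"
    with H obtain a1 where a1: "a1 \<in> U M" "ltM M lt \<alpha> a1"
      and Ha: "unb M lt k (\<lambda>as'. \<exists>cs. length cs = length ys \<and> set cs \<subseteq> U M \<and>
                 (\<forall>c\<in>set cs. ltM M lt c y0) \<and> sat M (assign e (xs @ ys @ ts) ((a1#as') @ cs @ bs)) \<phi>)"
      by (auto simp: lxs')
    have Ha': "unb M lt k (\<lambda>as'. \<exists>cs. length cs = length ys \<and> set cs \<subseteq> U M \<and>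
                 (\<forall>c\<in>set cs. ltM M lt c y0) \<and> sat M (assign e (xs' @ ys @ (x1#ts)) (as' @ cs @ (a1#bs))) \<phi>)"
      using Ha
    proof (rule unb_mono[rotated])
      fix as' assume l: "length as' = k" and "\<exists>cs. length cs = length ys \<and> set cs \<subseteq> U M \<and>
                 (\<forall>c\<in>set cs. ltM M lt c y0) \<and> sat M (assign e (xs @ ys @ ts) ((a1#as') @ cs @ bs)) \<phi>"
      then obtain cs where c: "length cs = length ys" "set cs \<subseteq> U M" "\<forall>c\<in>set cs. ltM M lt c y0"
        "sat M (assign e (xs @ ys @ ts) ((a1#as') @ cs @ bs)) \<phi>" by blast
      have "assign e (xs' @ ys @ (x1#ts)) (as' @ cs @ (a1#bs)) = assign e (xs @ ys @ ts) ((a1#as') @ cs @ bs)"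
        unfolding xs by (rule envEQ3[OF dist]) (use l lxs' c in auto)
      then show "\<exists>cs. length cs = length ys \<and> set cs \<subseteq> U M \<and>
                 (\<forall>c\<in>set cs. ltM M lt c y0) \<and> sat M (assign e (xs' @ ys @ (x1#ts)) (as' @ cs @ (a1#bs))) \<phi>"
        using c by metis
    qed
    have pre: "length xs' = k \<and> wf_fm fa ra \<phi> \<and> distinct (xs' @ ys @ (x1#ts)) \<and> fv \<phi> \<subseteq> set (xs' @ ys @ (x1#ts))"
      using H0 xs lxs' dist by auto
    have "length (a1#bs) = length (x1#ts) \<and> set (a1#bs) \<subseteq> U M" using bs a1 by auto
    from Rk[unfolded regular_def, rule_format, OF pre M e y0 this Ha']
    obtain cs where cs: "length cs = length ys" "set cs \<subseteq> U M" "\<forall>c\<in>set cs. ltM M lt c y0"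
      and U: "unb M lt k (\<lambda>as'. sat M (assign e (xs' @ ys @ (x1#ts)) (as' @ cs @ (a1#bs))) \<phi>)" by blast
    have "sat M (assign e ([x1] @ ys @ ts) ([a1] @ cs @ bs)) \<theta>"
      unfolding \<theta>sat using U
    proof (rule unb_mono[rotated])
      fix as' assume l: "length as' = k" and S: "sat M (assign e (xs' @ ys @ (x1#ts)) (as' @ cs @ (a1#bs))) \<phi>"
      have "assign e (xs' @ ys @ (x1#ts)) (as' @ cs @ (a1#bs)) = assign (assign e ([x1] @ ys @ ts) ([a1] @ cs @ bs)) xs' as'"
        using envEQ(1)[OF dist, of as' cs e a1 bs] l lxs' cs(1) by simp
      then show "sat M (assign (assign e ([x1] @ ys @ ts) ([a1] @ cs @ bs)) xs' as') \<phi>" using S by metis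
    qed
    then show "\<exists>x\<in>U M. ltM M lt \<alpha> x \<and> (\<exists>cs. length cs = length ys \<and> set cs \<subseteq> U M \<and>
                 (\<forall>c\<in>set cs. ltM M lt c y0) \<and> sat M (assign e ([x1] @ ys @ ts) ([x] @ cs @ bs)) \<theta>)"
      using a1 cs by blast
  qed
  then show ?thesis by simp
  qed
  have pre1: "length [x1] = 1 \<and> wf_fm fa ra \<theta> \<and> distinct ([x1] @ ys @ ts) \<and> fv \<theta> \<subseteq> set ([x1] @ ys @ ts)"
    using \<theta>wf \<theta>fv distR1 by auto
  from R1[unfolded regular_def, rule_format, OF pre1 M e y0 bs hyp1]
  obtain cs where cs: "length cs = length ys" "set cs \<subseteq> U M" "\<forall>c\<in>set cs. ltM M lt c y0"
    and U1: "unb M lt 1 (\<lambda>as. sat M (assign e ([x1] @ ys @ ts) (as @ cs @ bs)) \<theta>)" by blast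
  have "unb M lt (Suc k) (\<lambda>as. sat M (assign e (xs @ ys @ ts) (as @ cs @ bs)) \<phi>)"
  proof (simp only: unb.simps, intro ballI)
    fix \<alpha> assume "\<alpha> \<in> U M"
    with U1 obtain a1 where a1: "a1 \<in> U M" "ltM M lt \<alpha> a1"
      and S: "sat M (assign e ([x1] @ ys @ ts) ([a1] @ cs @ bs)) \<theta>" by auto
    have "unb M lt k (\<lambda>as'. sat M (assign e (xs @ ys @ ts) ((a1#as') @ cs @ bs)) \<phi>)"
      using S[unfolded \<theta>sat]
    proof (rule unb_mono[rotated])
      fix as' assume l: "length as' = k" and S: "sat M (assign (assign e ([x1] @ ys @ ts) ([a1] @ cs @ bs)) xs' as') \<phi>"
      have "assign e (xs @ ys @ ts) ((a1#as') @ cs @ bs) = assign (assign e ([x1] @ ys @ ts) ([a1] @ cs @ bs)) xs' as'"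
        unfolding xs using envEQ(2)[OF dist, of as' cs e a1 bs] l lxs' cs(1) by simp
      then show "sat M (assign e (xs @ ys @ ts) ((a1#as') @ cs @ bs)) \<phi>" using S by metis
    qed
    then show "\<exists>x\<in>U M. ltM M lt \<alpha> x \<and> unb M lt k (\<lambda>xsa. sat M (assign e (xs @ ys @ ts) ((x # xsa) @ cs @ bs)) \<phi>)"
      using a1 by blast
  qed
  then show "\<exists>cs. length cs = length ys \<and> set cs \<subseteq> U M \<and> (\<forall>c\<in>set cs. ltM M lt c y0) \<and>
                  unb M lt (Suc k) (\<lambda>as. sat M (assign e (xs @ ys @ ts) (as @ cs @ bs)) \<phi>)"
    using cs by blast
qed

lemma ub_exists:
  assumes tr: "\<forall>a\<in>U M. \<forall>b\<in>U M. \<forall>c\<in>U M. ltM M lt a b \<and> ltM M lt b c \<longrightarrow> ltM M lt a c"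
    and tot: "\<forall>a\<in>U M. \<forall>b\<in>U M. ltM M lt a b \<or> a = b \<or> ltM M lt b a"
  shows "set L \<subseteq> U M \<Longrightarrow> L \<noteq> [] \<Longrightarrow> \<exists>m\<in>U M. \<forall>l\<in>set L. l = m \<or> ltM M lt l m"
proof (induction L)
  case Nil then show ?case by simp
next
  case (Cons a L)
  show ?case
  proof (cases "L = []")
    case True then show ?thesis using Cons by auto
  next
    case False
    then obtain m where m: "m \<in> U M" "\<forall>l\<in>set L. l = m \<or> ltM M lt l m" using Cons by auto
    have a: "a \<in> U M" using Cons by auto
    show ?thesis
    proof (cases "ltM M lt m a")
      case True
      have "\<forall>l\<in>set (a # L). l = a \<or> ltM M lt l a"
      proof
        fix l assume l: "l \<in> set (a # L)"
        show "l = a \<or> ltM M lt l a"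
        proof (cases "l = a")
          case False
          then have lL: "l \<in> set L" using l by simp
          then have lU: "l \<in> U M" using Cons.prems by auto
          have "l = m \<or> ltM M lt l m" using m(2) lL by blast
          then show ?thesis using True tr[rule_format, of l m a] lU m(1) a by blast
        qed simp
      qed
      then show ?thesis using a by blast
    next
      case False
      then have "a = m \<or> ltM M lt a m" using tot m a by blast
      then show ?thesis using m by auto
    qed
  qed
qed

lemma reg1:
  assumes lt2: "ra lt = 2" and lin: "lt_linear A fa ra lt T" and I: "inaccessible A fa ra lt T"
  shows "regular A fa ra lt T 1"
  unfolding regular_def
proof (intro allI impI ballI)
  fix \<phi> xs ys ts M e y0 bs
  assume H0: "length xs = 1 \<and> wf_fm fa ra \<phi> \<and> distinct (xs @ ys @ ts) \<and> fv \<phi> \<subseteq> set (xs @ ys @ ts)"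
    and M: "M \<in> models A fa ra T" and e: "is_env M e" and y0: "y0 \<in> U M"
    and bs: "length bs = length ts \<and> set bs \<subseteq> U M"
    and H: "unb M lt 1 (\<lambda>as. \<exists>cs. length cs = length ys \<and> set cs \<subseteq> U M \<and>
                 (\<forall>c\<in>set cs. ltM M lt c y0) \<and> sat M (assign e (xs @ ys @ ts) (as @ cs @ bs)) \<phi>)"
  from H0 obtain x where xs: "xs = [x]" by (cases xs) auto
  have dist: "distinct (x # ys @ ts)" using H0 xs by simp
  have tr: "\<forall>a\<in>U M. \<forall>b\<in>U M. \<forall>c\<in>U M. ltM M lt a b \<and> ltM M lt b c \<longrightarrow> ltM M lt a c"
    and tot: "\<forall>a\<in>U M. \<forall>b\<in>U M. ltM M lt a b \<or> a = b \<or> ltM M lt b a"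
    using lin M unfolding lt_linear_def by blast+
  have H': "\<forall>\<alpha>\<in>U M. \<exists>a\<in>U M. ltM M lt \<alpha> a \<and> (\<exists>cs. length cs = length ys \<and> set cs \<subseteq> U M \<and>
                 (\<forall>c\<in>set cs. ltM M lt c y0) \<and> sat M (assign e (x # ys @ ts) (a # cs @ bs)) \<phi>)"
    using H unfolding xs by simp
  show "\<exists>cs. length cs = length ys \<and> set cs \<subseteq> U M \<and> (\<forall>c\<in>set cs. ltM M lt c y0) \<and>
                  unb M lt 1 (\<lambda>as. sat M (assign e (xs @ ys @ ts) (as @ cs @ bs)) \<phi>)"
  proof (rule ccontr)
    assume C: "\<not> (\<exists>cs. length cs = length ys \<and> set cs \<subseteq> U M \<and> (\<forall>c\<in>set cs. ltM M lt c y0) \<and>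
                  unb M lt 1 (\<lambda>as. sat M (assign e (xs @ ys @ ts) (as @ cs @ bs)) \<phi>))"
    obtain w where w: "w \<notin> fv \<phi> \<union> set (x # ys @ ts)"
    proof -
      have "finite (fv \<phi> \<union> set (x # ys @ ts))" using finite_fv[of \<phi>] by simp
      then show ?thesis using that ex_new_if_finite[OF infinite_UNIV_nat] by blast
    qed
    define \<chi> where "\<chi> = Neg (Ex x (Conj (Rel lt [Var w, Var x]) \<phi>))"
    have \<chi>wf: "wf_fm fa ra \<chi>" using lt2 H0 by (simp add: \<chi>_def)
    have \<chi>fv: "fv \<chi> \<subseteq> set ([w] @ (ys @ ts))" using H0 xs by (auto simp: \<chi>_def)
    have \<chi>d: "distinct ([w] @ (ys @ ts))" using dist w by auto
    have wx: "w \<noteq> x" using w by auto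
    have \<chi>sat: "sat M (assign e ([w] @ (ys @ ts)) ([\<alpha>] @ (cs @ bs))) \<chi> \<longleftrightarrow>
        (\<forall>a\<in>U M. ltM M lt \<alpha> a \<longrightarrow> \<not> sat M (assign e (x # ys @ ts) (a # cs @ bs)) \<phi>)" for \<alpha> cs
    proof -
      define E where "E = assign e (ys @ ts) (cs @ bs)"
      have "sat M (E(w := \<alpha>, x := a)) \<phi> = sat M (E(x := a)) \<phi>" for a
        by (rule sat_cong) (use w in auto)
      then show ?thesis using wx by (simp add: \<chi>_def E_def[symmetric])
    qed
    obtain m where m: "m \<in> U M" "\<forall>l\<in>set (y0 # bs). l = m \<or> ltM M lt l m"
      using ub_exists[OF tr tot, of "y0 # bs"] y0 bs by auto
    from bspec[OF H' m(1)] obtain z0 where z0: "z0 \<in> U M" "ltM M lt m z0" by blast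
    have y0z0: "ltM M lt y0 z0"
    proof -
      have "y0 = m \<or> ltM M lt y0 m" using m(2) by simp
      then show ?thesis using z0 tr[rule_format, of y0 m z0] y0 m(1) by blast
    qed
    have bsz0: "\<forall>b\<in>set bs. ltM M lt b z0"
    proof
      fix b assume b: "b \<in> set bs"
      then have "b = m \<or> ltM M lt b m" using m(2) by simp
      then show "ltM M lt b z0" using z0 tr[rule_format, of b m z0] b bs m(1) by blast
    qed
    note I' = I[unfolded inaccessible_def, THEN spec[of _ \<chi>], THEN spec[of _ "[w]"], THEN spec[of _ "ys @ ts"],
       THEN mp, OF conjI[OF \<chi>wf conjI[OF \<chi>d \<chi>fv]]]
    obtain z1 where z1: "z1 \<in> U M" "ltM M lt z0 z1"
      and Z: "\<forall>ys0. length ys0 = length [w] \<and> set ys0 \<subseteq> U M \<longrightarrow>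
               (\<exists>ys1. length ys1 = length [w] \<and> set ys1 \<subseteq> U M \<and> (\<forall>y\<in>set ys1. ltM M lt y z1) \<and>
                 (\<forall>ts'. length ts' = length (ys @ ts) \<and> set ts' \<subseteq> U M \<and> (\<forall>t\<in>set ts'. ltM M lt t z0) \<longrightarrow>
                   (sat M (assign e ([w] @ (ys @ ts)) (ys0 @ ts')) \<chi> \<longleftrightarrow>
                    sat M (assign e ([w] @ (ys @ ts)) (ys1 @ ts')) \<chi>)))"
      using I'[THEN bspec, OF M, THEN spec[of _ e], THEN mp, OF e, THEN bspec, OF z0(1)] by blast
    obtain a cs where a: "a \<in> U M" "ltM M lt z1 a" and cs: "length cs = length ys" "set cs \<subseteq> U M"
        "\<forall>c\<in>set cs. ltM M lt c y0" and S: "sat M (assign e (x # ys @ ts) (a # cs @ bs)) \<phi>"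
      using bspec[OF H' z1(1)] by blast
    have "\<not> unb M lt 1 (\<lambda>as. sat M (assign e (xs @ ys @ ts) (as @ cs @ bs)) \<phi>)" using C cs by blast
    then have "\<not> (\<forall>\<alpha>\<in>U M. \<exists>a\<in>U M. ltM M lt \<alpha> a \<and> sat M (assign e (x # ys @ ts) (a # cs @ bs)) \<phi>)"
      unfolding xs by simp
    then obtain \<alpha>0 where \<alpha>0: "\<alpha>0 \<in> U M"
      and N: "\<forall>a\<in>U M. ltM M lt \<alpha>0 a \<longrightarrow> \<not> sat M (assign e (x # ys @ ts) (a # cs @ bs)) \<phi>"
      by blast
    have S0: "sat M (assign e ([w] @ (ys @ ts)) ([\<alpha>0] @ (cs @ bs))) \<chi>" using N \<chi>sat[of \<alpha>0 cs] by blast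
    have "length [\<alpha>0] = length [w] \<and> set [\<alpha>0] \<subseteq> U M" using \<alpha>0 by simp
    from Z[THEN spec[of _ "[\<alpha>0]"], THEN mp, OF this]
    obtain ys1 where ys1: "length ys1 = length [w]" "set ys1 \<subseteq> U M" "\<forall>y\<in>set ys1. ltM M lt y z1"
      and Z1: "\<forall>ts'. length ts' = length (ys @ ts) \<and> set ts' \<subseteq> U M \<and> (\<forall>t\<in>set ts'. ltM M lt t z0) \<longrightarrow>
                   (sat M (assign e ([w] @ (ys @ ts)) ([\<alpha>0] @ ts')) \<chi> \<longleftrightarrow>
                    sat M (assign e ([w] @ (ys @ ts)) (ys1 @ ts')) \<chi>)"
      by blast
    obtain \<alpha>1 where a1: "ys1 = [\<alpha>1]" using ys1(1) by (cases ys1) auto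
    have a1U: "\<alpha>1 \<in> U M" and a1z1: "ltM M lt \<alpha>1 z1" using ys1 a1 by auto
    have csz0: "\<forall>c\<in>set cs. ltM M lt c z0"
      using cs y0z0 tr[rule_format, of _ y0 z0] y0 z0 by blast
    have "length (cs @ bs) = length (ys @ ts) \<and> set (cs @ bs) \<subseteq> U M \<and> (\<forall>t\<in>set (cs @ bs). ltM M lt t z0)"
      using cs bs csz0 bsz0 by auto
    from Z1[rule_format, OF this] S0 a1
    have "sat M (assign e ([w] @ (ys @ ts)) ([\<alpha>1] @ (cs @ bs))) \<chi>" by simp
    then have N1: "\<forall>a\<in>U M. ltM M lt \<alpha>1 a \<longrightarrow> \<not> sat M (assign e (x # ys @ ts) (a # cs @ bs)) \<phi>"
      using \<chi>sat[of \<alpha>1 cs] by blast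
    have "ltM M lt \<alpha>1 a" using tr[rule_format, of \<alpha>1 z1 a] a1U a1z1 z1 a by blast
    then show False using N1 a S by blast
  qed
qed

lemma reg0: "regular A fa ra lt T 0"
  unfolding regular_def by simp

theorem lemma2p3:
  fixes fa :: "'f \<Rightarrow> nat" and ra :: "'r \<Rightarrow> nat" and lt :: 'r
    and T :: "('f, 'r) fm set"
  assumes "countable (UNIV :: 'f set)" and "countable (UNIV :: 'r set)"
    and "ra lt = 2"
    and "complete_theory TYPE('a) fa ra T"
    and "has_skolem TYPE('a) fa ra T"
    and "lt_linear TYPE('a) fa ra lt T"
  shows "(inaccessible TYPE('a) fa ra lt T \<longrightarrow> regular TYPE('a) fa ra lt T 1)
       \<and> (regular TYPE('a) fa ra lt T 1 \<longrightarrow> (\<forall>k. regular TYPE('a) fa ra lt T k))"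
proof (intro conjI impI allI)
  show "regular TYPE('a) fa ra lt T 1" if "inaccessible TYPE('a) fa ra lt T"
    using reg1[OF assms(3) assms(6) that] .
next
  fix k
  assume R1: "regular TYPE('a) fa ra lt T 1"
  show "regular TYPE('a) fa ra lt T k"
  proof (induction k)
    case 0 show ?case by (rule reg0)
  next
    case (Suc k) then show ?case using reg_step[OF assms(3) R1] by blast
  qed
qed

end
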